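(* The class of decision trees over $\mathbb{R}^d$ of size $s$ has a lossless compression scheme of size at most $2ds$ with respect to the query set consisting of labels and the same-leaf oracle $\mathcal{O}_{\text{leaf}}$, and the inference rule $R_{\text{rect}}$.
   Context: A decision tree over $\mathbb{R}^d$ is a binary tree whose internal nodes are inequalities $x_i\ge b$ or $x_i\le b$ and whose leaves carry labels in $\{0,1\}$; $x$ is labeled by the leaf reached following the inequalities from the root. Its size is its number of leaves. The same-leaf oracle $\mathcal{O}_{\text{leaf}}(h,x,x')$ returns whether $x,x'$ reach the same leaf of $h$. For $S\subseteq\mathbb{R}^d$, $Q_h(S)$ is the set of all combinations of responses to label and same-leaf queries on $S$; $q(S)|_W$ is restriction to $W\subseteq S$. Inference rule $R_{\text{rect}}$: $x\in I_{R_{\text{rect}}}(q(S))$ iff $x$ lies in the smallest axis-aligned box containing some subset $T\subseteq S$ all of whose pairs are reported to lie in the same leaf (so $x$ is given that leaf's label). A lossless compression scheme of size $k$ w.r.t. this rule: for every tree $h$ of size $s$, every $S$ on which $h$ is constant, and every $q(S)\in Q_h(S)$, there is $W\subseteq S$, $|W|\le k$, with $I_{R_{\text{rect}}}(q(S))=I_{R_{\text{rect}}}(q(S)|_W)$. *)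

theory Defs
  imports "HOL-Analysis.Analysis"
begin

text \<open>An internal node
  Node i b ge l r tests x_i \<ge> b (if ge) or x_i \<le> b (if not ge);
  if the test holds go to l, otherwise to r. Leaves carry labels in {0,1} = bool.\<close>

datatype 'd dtree = Leaf bool | Node 'd real bool "'d dtree" "'d dtree"

definition node_test :: "'d \<Rightarrow> real \<Rightarrow> bool \<Rightarrow> real^'d \<Rightarrow> bool" where
  "node_test i b ge x = (if ge then x $ i \<ge> b else x $ i \<le> b)"

fun dt_size :: "'d dtree \<Rightarrow> nat" where
  "dt_size (Leaf _) = 1"
| "dt_size (Node _ _ _ l r) = dt_size l + dt_size r"

fun dt_label :: "'d dtree \<Rightarrow> real^'d \<Rightarrow> bool" where
  "dt_label (Leaf c) x = c"
| "dt_label (Node i b ge l r) x = (if node_test i b ge x then dt_label l x else dt_label r x)"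

text \<open>The leaf reached by x, identified by the root-to-leaf path of branch directions.\<close>
fun dt_leaf :: "'d dtree \<Rightarrow> real^'d \<Rightarrow> bool list" where
  "dt_leaf (Leaf c) x = []"
| "dt_leaf (Node i b ge l r) x =
     (if node_test i b ge x then True # dt_leaf l x else False # dt_leaf r x)"

definition same_leaf :: "'d dtree \<Rightarrow> real^'d \<Rightarrow> real^'d \<Rightarrow> bool" where
  "same_leaf h x y = (dt_leaf h x = dt_leaf h y)"

datatype 'd answer = LabelAns "real^'d" bool | SameAns "real^'d" "real^'d" bool

fun ans_points :: "'d answer \<Rightarrow> (real^'d) set" where
  "ans_points (LabelAns x _) = {x}"
| "ans_points (SameAns x y _) = {x, y}"

definition responses :: "'d dtree \<Rightarrow> (real^'d) set \<Rightarrow> 'd answer set" where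
  "responses h S = {LabelAns x (dt_label h x) | x. x \<in> S}
                 \<union> {SameAns x y (same_leaf h x y) | x y. x \<in> S \<and> y \<in> S}"

text \<open>Q_h(S): the set of all possible response combinations of h on S (the oracles are
  deterministic, so this is the single complete response set).\<close>
definition Q :: "'d dtree \<Rightarrow> (real^'d) set \<Rightarrow> 'd answer set set" where
  "Q h S = {responses h S}"

definition restr :: "'d answer set \<Rightarrow> (real^'d) set \<Rightarrow> 'd answer set" where
  "restr q W = {a \<in> q. ans_points a \<subseteq> W}"

definition bbox :: "(real^'d) set \<Rightarrow> (real^'d) set" where
  "bbox T = {x. \<forall>i. Min ((\<lambda>t. t $ i) ` T) \<le> x $ i \<and> x $ i \<le> Max ((\<lambda>t. t $ i) ` T)}"

definition I_rect :: "'d answer set \<Rightarrow> ((real^'d) \<times> bool) set" where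
  "I_rect q = {(x, l). \<exists>T. finite T \<and> T \<noteq> {} \<and>
      (\<forall>t\<in>T. LabelAns t l \<in> q) \<and>
      (\<forall>t\<in>T. \<forall>u\<in>T. t \<noteq> u \<longrightarrow> SameAns t u True \<in> q) \<and>
      x \<in> bbox T}"

end

theory Submission
  imports Defs
begin

fun paths :: "'d dtree \<Rightarrow> bool list set" where
  "paths (Leaf c) = {[]}"
| "paths (Node i b ge l r) = Cons True ` paths l \<union> Cons False ` paths r"

lemma leaf_in_paths: "dt_leaf h x \<in> paths h"
  by (induction h) auto

lemma paths_fin: "finite (paths h)"
  by (induction h) auto

lemma paths_card: "card (paths h) \<le> dt_size h"
proof (induction h)
  case (Leaf c) then show ?case by simp
next
  case (Node i b ge l r)
  have "card (paths (Node i b ge l r)) \<le> card (Cons True ` paths l) + card (Cons False ` paths r)"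
    by (simp add: card_Un_le)
  also have "\<dots> \<le> card (paths l) + card (paths r)"
    by (intro add_mono card_image_le paths_fin)
  finally show ?case using Node by simp
qed

lemma lab_mem: "LabelAns t l \<in> restr (responses h S) W \<longleftrightarrow> t \<in> S \<and> t \<in> W \<and> l = dt_label h t"
  by (auto simp: restr_def responses_def)

lemma same_mem: "SameAns t u b \<in> restr (responses h S) W \<longleftrightarrow>
   t \<in> S \<and> u \<in> S \<and> t \<in> W \<and> u \<in> W \<and> b = same_leaf h t u"
  by (auto simp: restr_def responses_def)

lemma restr_self: "restr (responses h S) S = responses h S"
  by (auto simp: restr_def responses_def)

definition good :: "'d dtree \<Rightarrow> (real^'d) set \<Rightarrow> real^'d \<Rightarrow> bool \<Rightarrow> bool" where
  "good h W x l = (\<exists>T. finite T \<and> T \<noteq> {} \<and> T \<subseteq> W \<and>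
     (\<forall>t\<in>T. dt_label h t = l) \<and> (\<forall>t\<in>T. \<forall>u\<in>T. dt_leaf h t = dt_leaf h u) \<and> x \<in> bbox T)"

lemma I_rect_mem: "(x,l) \<in> I_rect q \<longleftrightarrow> (\<exists>T. finite T \<and> T \<noteq> {} \<and>
      (\<forall>t\<in>T. LabelAns t l \<in> q) \<and>
      (\<forall>t\<in>T. \<forall>u\<in>T. t \<noteq> u \<longrightarrow> SameAns t u True \<in> q) \<and>
      x \<in> bbox T)"
  unfolding I_rect_def by simp

lemma I_rect_char:
  assumes "W \<subseteq> S"
  shows "(x,l) \<in> I_rect (restr (responses h S) W) \<longleftrightarrow> good h W x l"
proof
  assume "(x,l) \<in> I_rect (restr (responses h S) W)"
  then obtain T where T: "finite T" "T \<noteq> {}" "\<forall>t\<in>T. LabelAns t l \<in> restr (responses h S) W"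
    "\<forall>t\<in>T. \<forall>u\<in>T. t \<noteq> u \<longrightarrow> SameAns t u True \<in> restr (responses h S) W" "x \<in> bbox T"
    unfolding I_rect_mem by (elim exE conjE) 
  have b1: "T \<subseteq> W" using T(3) by (auto simp: lab_mem)
  have b2: "\<forall>t\<in>T. dt_label h t = l" using T(3) by (simp add: lab_mem)
  have b3: "\<forall>t\<in>T. \<forall>u\<in>T. dt_leaf h t = dt_leaf h u"
  proof (intro ballI)
    fix t u assume tu: "t \<in> T" "u \<in> T"
    show "dt_leaf h t = dt_leaf h u"
    proof (cases "t = u")
      case False
      then have "SameAns t u True \<in> restr (responses h S) W" using tu T(4) by blast
      then show ?thesis by (simp add: same_mem same_leaf_def)
    qed simp
  qed
  show "good h W x l" unfolding good_def
    using T(1,2,5) b1 b2 b3 by blast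
next
  assume "good h W x l"
  then obtain T where T: "finite T" "T \<noteq> {}" "T \<subseteq> W" "\<forall>t\<in>T. dt_label h t = l"
    "\<forall>t\<in>T. \<forall>u\<in>T. dt_leaf h t = dt_leaf h u" "x \<in> bbox T" unfolding good_def by (elim exE conjE)
  have a1: "\<forall>t\<in>T. LabelAns t l \<in> restr (responses h S) W"
  proof
    fix t assume t: "t \<in> T"
    have "t \<in> W" "t \<in> S" "dt_label h t = l" using t T(3,4) assms by auto
    then show "LabelAns t l \<in> restr (responses h S) W" by (simp add: lab_mem)
  qed
  have a2: "\<forall>t\<in>T. \<forall>u\<in>T. t \<noteq> u \<longrightarrow> SameAns t u True \<in> restr (responses h S) W"
  proof (intro ballI impI)
    fix t u assume tu: "t \<in> T" "u \<in> T"
    have "t \<in> W" "u \<in> W" "t \<in> S" "u \<in> S" using tu T(3) assms by auto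
    moreover have "dt_leaf h t = dt_leaf h u" using tu T(5) by blast
    ultimately show "SameAns t u True \<in> restr (responses h S) W"
      by (simp add: same_mem same_leaf_def)
  qed
  show "(x,l) \<in> I_rect (restr (responses h S) W)"
    unfolding I_rect_mem using T(1,2,6) a1 a2 by blast
qed

theorem proposition4p3:
  fixes s :: nat
  shows "\<forall>(h :: 'd::finite dtree) (S :: (real^'d) set) q.
           dt_size h = s \<longrightarrow> finite S \<longrightarrow>
           (\<forall>x\<in>S. \<forall>y\<in>S. dt_label h x = dt_label h y) \<longrightarrow> q \<in> Q h S \<longrightarrow>
           (\<exists>W \<subseteq> S. card W \<le> 2 * CARD('d) * s \<and> I_rect q = I_rect (restr q W))"
proof (intro allI impI)
  fix h :: "'d dtree" and S :: "(real^'d) set" and q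
  assume hs: "dt_size h = s" and fS: "finite S" and lc: "\<forall>x\<in>S. \<forall>y\<in>S. dt_label h x = dt_label h y"
    and qQ: "q \<in> Q h S"
  have q: "q = responses h S" using qQ by (simp add: Q_def)
  define P where "P = dt_leaf h ` S"
  define SL where "SL p = {x\<in>S. dt_leaf h x = p}" for p
  define mn where "mn p i = (SOME a. a \<in> SL p \<and> a $ i = Min ((\<lambda>t. t $ i) ` SL p))" for p i
  define mx where "mx p i = (SOME a. a \<in> SL p \<and> a $ i = Max ((\<lambda>t. t $ i) ` SL p))" for p i
  have SLfin: "finite (SL p)" for p using fS by (simp add: SL_def)
  have SLne: "p \<in> P \<Longrightarrow> SL p \<noteq> {}" for p by (auto simp: P_def SL_def)
  have mn: "mn p i \<in> SL p \<and> mn p i $ i = Min ((\<lambda>t. t $ i) ` SL p)" if "p \<in> P" for p i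
  proof -
    have "Min ((\<lambda>t. t $ i) ` SL p) \<in> (\<lambda>t. t $ i) ` SL p"
      using SLfin SLne[OF that] by (intro Min_in) auto
    then have "\<exists>a. a \<in> SL p \<and> a $ i = Min ((\<lambda>t. t $ i) ` SL p)" by force
    then show ?thesis unfolding mn_def by (rule someI_ex)
  qed
  have mx: "mx p i \<in> SL p \<and> mx p i $ i = Max ((\<lambda>t. t $ i) ` SL p)" if "p \<in> P" for p i
  proof -
    have "Max ((\<lambda>t. t $ i) ` SL p) \<in> (\<lambda>t. t $ i) ` SL p"
      using SLfin SLne[OF that] by (intro Max_in) auto
    then have "\<exists>a. a \<in> SL p \<and> a $ i = Max ((\<lambda>t. t $ i) ` SL p)" by force
    then show ?thesis unfolding mx_def by (rule someI_ex)
  qed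
  define Wp where "Wp p = (\<Union>i. {mn p i, mx p i})" for p
  define W where "W = (\<Union>p\<in>P. Wp p)"
  have WpS: "Wp p \<subseteq> SL p" if "p \<in> P" for p using mn[OF that] mx[OF that] by (auto simp: Wp_def)
  have WS: "W \<subseteq> S" using WpS by (auto simp: W_def SL_def)
  have Pfin: "finite P" using fS by (simp add: P_def)
  have cardP: "card P \<le> s"
  proof -
    have "P \<subseteq> paths h" using leaf_in_paths by (auto simp: P_def)
    then have "card P \<le> card (paths h)" by (intro card_mono paths_fin)
    then show ?thesis using paths_card[of h] hs by simp
  qed
  have cardWp: "card (Wp p) \<le> 2 * CARD('d)" for p
  proof -
    have "card (Wp p) \<le> (\<Sum>i\<in>UNIV. card {mn p i, mx p i})"
      unfolding Wp_def by (rule card_UN_le) simp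
    also have "\<dots> \<le> (\<Sum>i\<in>(UNIV::'d set). 2)"
      by (intro sum_mono) (simp add: card_insert_le_m1 card_2_iff' card_insert_if)
    finally show ?thesis by simp
  qed
  have "card W \<le> (\<Sum>p\<in>P. card (Wp p))" unfolding W_def by (rule card_UN_le[OF Pfin])
  also have "\<dots> \<le> (\<Sum>p\<in>P. 2 * CARD('d))" by (intro sum_mono cardWp)
  also have "\<dots> = card P * (2 * CARD('d))" by simp
  also have "\<dots> \<le> s * (2 * CARD('d))" using cardP by simp
  finally have cardW: "card W \<le> 2 * CARD('d) * s" by (simp add: mult.commute)
  have "I_rect q = I_rect (restr q W)"
  proof (intro set_eqI)
    fix z :: "(real^'d) \<times> bool"
    obtain x l where z: "z = (x,l)" by (cases z)
    have "good h S x l \<longleftrightarrow> good h W x l"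
    proof
      assume "good h W x l"
      then show "good h S x l" using WS unfolding good_def by (meson order_trans)
    next
      assume "good h S x l"
      then obtain T where T: "finite T" "T \<noteq> {}" "T \<subseteq> S" "\<forall>t\<in>T. dt_label h t = l"
        "\<forall>t\<in>T. \<forall>u\<in>T. dt_leaf h t = dt_leaf h u" "x \<in> bbox T"
        unfolding good_def by (elim exE conjE)
      obtain t0 where t0: "t0 \<in> T" using T(2) by blast
      define p where "p = dt_leaf h t0"
      have pP: "p \<in> P" using t0 T(3) by (auto simp: P_def p_def)
      have TSL: "T \<subseteq> SL p"
      proof
        fix t assume t: "t \<in> T"
        have "dt_leaf h t = dt_leaf h t0" using T(5) t t0 by blast
        moreover have "t \<in> S" using t T(3) by blast
        ultimately show "t \<in> SL p" by (simp add: SL_def p_def)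
      qed
      have c1: "finite (Wp p)" by (simp add: Wp_def)
      have c2: "Wp p \<noteq> {}" by (simp add: Wp_def)
      have c3: "Wp p \<subseteq> W" using pP by (auto simp: W_def)
      have c4: "\<forall>t\<in>Wp p. dt_label h t = l"
      proof
        fix t assume "t \<in> Wp p"
        then have "t \<in> S" using WpS[OF pP] by (auto simp: SL_def)
        moreover have "t0 \<in> S" "dt_label h t0 = l" using T(3,4) t0 by auto
        ultimately show "dt_label h t = l" using lc by metis
      qed
      have c5: "\<forall>t\<in>Wp p. \<forall>u\<in>Wp p. dt_leaf h t = dt_leaf h u"
        using WpS[OF pP] by (auto simp: SL_def)
      have c6: "x \<in> bbox (Wp p)"
        unfolding bbox_def
      proof (intro CollectI allI conjI)
        fix i
        have fW: "finite ((\<lambda>t. t $ i) ` Wp p)" by (simp add: Wp_def)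
        have "Min ((\<lambda>t. t $ i) ` Wp p) \<le> mn p i $ i"
          using fW by (intro Min_le) (auto simp: Wp_def)
        also have "\<dots> = Min ((\<lambda>t. t $ i) ` SL p)" using mn[OF pP] by simp
        also have "\<dots> \<le> Min ((\<lambda>t. t $ i) ` T)"
          using TSL T(2) SLfin by (intro Min_antimono) auto
        also have "\<dots> \<le> x $ i" using T(6) by (simp add: bbox_def)
        finally show "Min ((\<lambda>t. t $ i) ` Wp p) \<le> x $ i" .
        have "x $ i \<le> Max ((\<lambda>t. t $ i) ` T)" using T(6) by (simp add: bbox_def)
        also have "\<dots> \<le> Max ((\<lambda>t. t $ i) ` SL p)"
          using TSL T(2) SLfin by (intro Max_mono) auto
        also have "\<dots> = mx p i $ i" using mx[OF pP] by simp
        also have "\<dots> \<le> Max ((\<lambda>t. t $ i) ` Wp p)"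
          using fW by (intro Max_ge) (auto simp: Wp_def)
        finally show "x $ i \<le> Max ((\<lambda>t. t $ i) ` Wp p)" .
      qed
      show "good h W x l" unfolding good_def
        using c1 c2 c3 c4 c5 c6 by blast
    qed
    moreover have "(x,l) \<in> I_rect q \<longleftrightarrow> good h S x l"
      using I_rect_char[where W=S and S=S and h=h and x=x and l=l] restr_self[of h S] q by simp
    moreover have "(x,l) \<in> I_rect (restr q W) \<longleftrightarrow> good h W x l"
      using I_rect_char[OF WS, where h=h and x=x and l=l] q by simp
    ultimately show "z \<in> I_rect q \<longleftrightarrow> z \<in> I_rect (restr q W)" using z by simp
  qed
  then show "\<exists>W \<subseteq> S. card W \<le> 2 * CARD('d) * s \<and> I_rect q = I_rect (restr q W)"
    using WS cardW by blast
qed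

end
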